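(* Let $\alpha,\beta\in[0,1]$ with $\alpha+\beta=1$, let $0<\delta<1/24$, and let $\xi$ be a real number with $\inf_{n\in\mathbb{N}} n\|n\xi\|\geqslant\delta$. Let $p$ be a positive integer and put $q=\left[\frac{p^2}{\delta}\log\frac{p^2}{\delta}\right]+1$. Let $$K=\Big\{x\in\mathbb{N}:\ p<x\leqslant q,\ \|x\xi\|\leqslant\frac{\delta}{(x\log(x+1))^\beta}\Big\}.$$ Then $$\sum_{x\in K}\frac{1}{(x\log(x+1))^\alpha}\leqslant 2^6\big(1+\log(1/\delta)\big).$$
   Context: $\|t\|$ denotes the distance from $t$ to the nearest integer; $[\cdot]$ is the integer part; $\log$ is the natural logarithm. *)

theory Defs
  imports "HOL-Analysis.Analysis"
begin

definition dist_int :: "real \<Rightarrow> real" where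
  "dist_int t = (INF k\<in>(\<int>::real set). \<bar>t - k\<bar>)"

end

theory Submission
  imports Defs
begin

lemma ln_lb: "0 < (t::real) \<Longrightarrow> 1 - 1/t \<le> ln t"
  using ln_le_minus_one[of "1/t"] by (simp add: ln_div)

lemma pair_ineq:
  fixes x y F b :: real
  assumes x1: "1 \<le> x" and xy: "x < y" and F: "F = x * ln (x+1)"
    and b0: "0 \<le> b" and hb1: "b \<le> 2*(y-x)" and hb2: "b \<le> x"
  shows "b / F \<le> 16 * (ln (ln (y+1)) - ln (ln (x+1)))"
proof -
  define L where "L = ln (x+1)"
  have L0: "0 < L" using x1 by (simp add: L_def)
  have F0: "0 < F" using F x1 L0 L_def by simp
  define z where "z = min y (2*x)"
  have xz: "x < z" using xy x1 by (simp add: z_def)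
  have zy: "z \<le> y" "z \<le> 2*x" by (auto simp: z_def)
  have Lz0: "0 < ln (z+1)" using xz x1 by simp
  have "ln (ln (z+1)) \<le> ln (ln (y+1))" using zy Lz0 xz x1 by simp
  have Lzle: "ln (z+1) \<le> 2 * L"
  proof -
    have "z + 1 \<le> (x+1)^2" using zy(2) using x1 by (simp add: power2_eq_square algebra_simps) (smt (verit) mult_nonneg_nonneg)
    hence "ln (z+1) \<le> ln ((x+1)^2)" using xz x1 by simp
    thus ?thesis using x1 by (simp add: ln_realpow L_def)
  qed
  have d1: "(z-x)/(z+1) \<le> ln (z+1) - ln (x+1)"
    using ln_lb[of "(z+1)/(x+1)"] xz x1 by (simp add: ln_div field_simps)
  have d2: "(ln (z+1) - ln (x+1)) / ln (z+1) \<le> ln (ln (z+1)) - ln (ln (x+1))"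
    using ln_lb[of "ln (z+1)/ln (x+1)"] Lz0 L0 by (simp add: ln_div field_simps L_def)
  have "(z-x)/(6*x*L) \<le> (z-x)/((z+1)*(2*L))"
  proof (rule divide_left_mono)
    have "(z+1)*(2*L) \<le> (3*x)*(2*L)" using zy x1 L0 by (intro mult_right_mono) auto
    thus "(z+1)*(2*L) \<le> 6*x*L" by simp
  qed (use xz L0 Lz0 x1 in auto)
  also have "\<dots> \<le> (z-x)/((z+1)*ln (z+1))"
    using Lzle xz Lz0 x1 L0 by (intro divide_left_mono mult_left_mono mult_pos_pos) auto
  also have "\<dots> = ((z-x)/(z+1)) / ln (z+1)" by simp
  also have "\<dots> \<le> (ln (z+1) - ln (x+1)) / ln (z+1)" using divide_right_mono[OF d1, of "ln (z+1)"] Lz0 by simp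
  also have "\<dots> \<le> ln (ln (y+1)) - ln (ln (x+1))" using d2 \<open>ln (ln (z+1)) \<le> ln (ln (y+1))\<close> by simp
  finally have key: "(z-x)/(6*x*L) \<le> ln (ln (y+1)) - ln (ln (x+1))" .
  have "b / F \<le> 12 * ((z-x)/(6*x*L))"
  proof (cases "y \<le> 2*x")
    case True
    hence "z = y" by (simp add: z_def)
    thus ?thesis using hb1 F L_def x1 L0 by (simp add: field_simps divide_right_mono)
  next
    case False
    hence "z = 2*x" by (simp add: z_def)
    thus ?thesis using hb2 F L_def x1 L0 by (simp add: field_simps)
  qed
  moreover have "0 \<le> (z-x)/(6*x*L)" using xz x1 L0 by simp
  ultimately have "b/F \<le> 12 * (ln (ln (y+1)) - ln (ln (x+1)))" using key by (smt (verit) mult_left_mono)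
  moreover have "0 \<le> ln (ln (y+1)) - ln (ln (x+1))" using key \<open>0 \<le> (z-x)/(6*x*L)\<close> by linarith
  ultimately show ?thesis using mult_right_mono[of "12::real" 16 "ln (ln (y+1)) - ln (ln (x+1))"] by linarith
qed
lemma ln3_ge1: "1 \<le> ln (3::real)"
  using ln_ge_iff[of 3 1] exp_le by simp

lemma dist_int_nonneg: "0 \<le> dist_int t"
  unfolding dist_int_def by (rule cINF_greatest) (auto intro: Ints_0)

lemma dist_int_le: "k \<in> \<int> \<Longrightarrow> dist_int t \<le> \<bar>t - k\<bar>"
  unfolding dist_int_def by (rule cINF_lower) (auto simp: bdd_below_def intro!: exI[of _ 0])

lemma dist_int_diff: "dist_int (a - b) \<le> dist_int a + dist_int b"
proof -
  have "dist_int (a - b) - \<bar>b - k2\<bar> \<le> dist_int a" if k2: "k2 \<in> \<int>" for k2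
  proof -
    have "dist_int (a - b) - \<bar>b - k2\<bar> \<le> \<bar>a - k1\<bar>" if k1: "k1 \<in> \<int>" for k1
    proof -
      have "dist_int (a - b) \<le> \<bar>(a - b) - (k1 - k2)\<bar>" using k1 k2 by (intro dist_int_le) auto
      thus ?thesis by linarith
    qed
    thus ?thesis unfolding dist_int_def[of a] by (intro cINF_greatest) (auto intro: Ints_0)
  qed
  hence "dist_int (a - b) - dist_int a \<le> \<bar>b - k2\<bar>" if "k2 \<in> \<int>" for k2
    using that by (smt (verit))
  hence "dist_int (a - b) - dist_int a \<le> dist_int b"
    unfolding dist_int_def[of b] by (intro cINF_greatest) (auto intro: Ints_0)
  thus ?thesis by linarith
qed

lemma sum_telescope_bound:
  fixes w \<Phi> :: "nat \<Rightarrow> real" and c :: real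
  assumes "finite S"
    and w1: "\<And>x. x \<in> S \<Longrightarrow> w x \<le> 1"
    and wp: "\<And>x y. x \<in> S \<Longrightarrow> y \<in> S \<Longrightarrow> x < y \<Longrightarrow> w x \<le> c * (\<Phi> y - \<Phi> x)"
  shows "S \<noteq> {} \<Longrightarrow> sum w S \<le> c * (\<Phi> (Max S) - \<Phi> (Min S)) + 1"
  using assms
proof (induction S rule: finite_linorder_min_induct)
  case empty
  then show ?case by simp
next
  case (insert b A)
  show ?case
  proof (cases "A = {}")
    case True
    then show ?thesis using insert.prems(2)[of b] by simp
  next
    case False
    have IH: "sum w A \<le> c * (\<Phi> (Max A) - \<Phi> (Min A)) + 1"
      using insert False by auto
    have mA: "Min A \<in> A" using False insert.hyps(1) by simp
    have bm: "b < Min A" using insert.hyps(2) mA by blast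
    have wb: "w b \<le> c * (\<Phi> (Min A) - \<Phi> b)"
      using insert.prems(3)[of b "Min A"] mA bm by simp
    have bA: "b \<notin> A" using insert.hyps(2) by blast
    have "sum w (insert b A) = w b + sum w A" using bA insert.hyps(1) by simp
    moreover have "Max (insert b A) = Max A"
      proof -
      have "Min A \<le> Max A" using mA insert.hyps(1) by (simp add: Max_ge)
      thus ?thesis using False insert.hyps(1) bm by (simp add: max_def less_imp_le)
    qed
    moreover have "Min (insert b A) = b" using False insert.hyps bm by (auto simp: min_def less_imp_le)
    ultimately show ?thesis using IH wb by (simp add: algebra_simps)
  qed
qed

theorem corollary3:
  fixes \<alpha> \<beta> \<delta> \<xi> :: real and p :: nat
  assumes "0 \<le> \<alpha>" "\<alpha> \<le> 1" "0 \<le> \<beta>" "\<beta> \<le> 1" "\<alpha> + \<beta> = 1"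
    and "0 < \<delta>" "\<delta> < 1/24"
    and "(INF n\<in>{1::nat..}. real n * dist_int (real n * \<xi>)) \<ge> \<delta>"
    and "p > 0"
  defines "q \<equiv> nat \<lfloor>(real p ^ 2 / \<delta>) * ln (real p ^ 2 / \<delta>)\<rfloor> + 1"
  defines "K \<equiv> {x::nat. x \<ge> 1 \<and> p < x \<and> x \<le> q \<and>
      dist_int (real x * \<xi>) \<le> \<delta> / (real x * ln (real x + 1)) powr \<beta>}"
  shows "(\<Sum>x\<in>K. 1 / (real x * ln (real x + 1)) powr \<alpha>) \<le> 2^6 * (1 + ln (1 / \<delta>))"
proof -
  note d0 = assms(6)
  define D where "D n = dist_int (real n * \<xi>)" for n :: nat
  have H: "\<delta> \<le> real n * D n" if "n \<ge> 1" for n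
  proof -
    have "(INF n\<in>{1::nat..}. real n * dist_int (real n * \<xi>)) \<le> real n * dist_int (real n * \<xi>)"
      using that by (intro cINF_lower) (auto simp: bdd_below_def intro!: exI[of _ 0] mult_nonneg_nonneg dist_int_nonneg)
    thus ?thesis using assms(8) by (simp add: D_def)
  qed
  define F where "F x = real x * ln (real x + 1)" for x :: nat
  define w where "w x = 1 / (real x * ln (real x + 1)) powr \<alpha>" for x :: nat
  define \<Phi> where "\<Phi> x = ln (ln (real x + 1))" for x :: nat
  have Fpos: "0 < F x" if "x \<ge> 1" for x using that by (simp add: F_def)
  have Fmono: "F x \<le> F y" if "x \<le> y" for x y
    unfolding F_def using that by (intro mult_mono) auto
  have Kp: "2 \<le> x \<and> x \<le> q \<and> p < x \<and> D x \<le> \<delta> / F x powr \<beta>" if "x \<in> K" for x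
    using that assms(9) by (auto simp: K_def D_def F_def)
  have wF: "w x = F x powr \<beta> / F x" if "x \<in> K" for x
  proof -
    have "F x > 0" using Kp[OF that] Fpos by simp
    have "\<alpha> = 1 - \<beta>" using assms(5) by simp
    hence "F x powr \<alpha> = F x / F x powr \<beta>" using \<open>F x > 0\<close> by (simp add: powr_diff)
    thus ?thesis by (simp add: w_def F_def[symmetric])
  qed
  have Fb: "F x powr \<beta> \<le> real x" if "x \<in> K" for x
  proof -
    have Fx: "F x > 0" using Kp[OF that] Fpos by simp
    hence Fb0: "F x powr \<beta> > 0" by simp
    have "\<delta> \<le> real x * (\<delta> / F x powr \<beta>)"
      using H[of x] Kp[OF that] mult_left_mono[of "D x" "\<delta> / F x powr \<beta>" "real x"] by simp
    hence "\<delta> * F x powr \<beta> \<le> real x * \<delta>" using Fb0 by (simp add: field_simps)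
    thus ?thesis using d0 by (simp add: mult.commute)
  qed
  have w1: "w x \<le> 1" if "x \<in> K" for x
  proof -
    have x2: "2 \<le> x" using Kp[OF that] by simp
    have Fx: "F x > 0" using x2 Fpos by simp
    have "w x \<le> real x / F x" unfolding wF[OF that] using Fb[OF that] Fx by (simp add: divide_right_mono)
    also have "\<dots> = 1 / ln (real x + 1)" using x2 by (simp add: F_def)
    also have "\<dots> \<le> 1"
    proof -
      have "ln 3 \<le> ln (real x + 1)" using x2 by simp
      hence "1 \<le> ln (real x + 1)" using ln3_ge1 by linarith
      thus ?thesis by (simp add: divide_le_eq)
    qed
    finally show ?thesis .
  qed
  have wp: "w x \<le> 16 * (\<Phi> y - \<Phi> x)" if xK: "x \<in> K" and yK: "y \<in> K" and xy: "x < y" for x y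
  proof -
    have x2: "2 \<le> x" using Kp[OF xK] by simp
    have Fx: "F x > 0" using x2 Fpos by simp
    hence Fb0: "F x powr \<beta> > 0" by simp
    have "real (y - x) * \<xi> = real y * \<xi> - real x * \<xi>" using xy by (simp add: of_nat_diff algebra_simps)
    hence Dd: "D (y - x) \<le> D y + D x" unfolding D_def using dist_int_diff by metis
    have "F x powr \<beta> \<le> F y powr \<beta>" using Fx Fmono[of x y] xy assms(3) by (intro powr_mono2) auto
    hence "\<delta> / F y powr \<beta> \<le> \<delta> / F x powr \<beta>" using Fb0 d0 by (intro divide_left_mono mult_pos_pos) auto
    hence "D (y - x) \<le> 2 * (\<delta> / F x powr \<beta>)" using Dd Kp[OF xK] Kp[OF yK] by linarith
    moreover have "\<delta> \<le> real (y - x) * D (y - x)" using H[of "y - x"] xy by simp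
    ultimately have "\<delta> \<le> real (y - x) * (2 * (\<delta> / F x powr \<beta>))"
      by (smt (verit) mult_left_mono of_nat_0_le_iff)
    hence "\<delta> * F x powr \<beta> \<le> 2 * real (y - x) * \<delta>" using Fb0 by (simp add: field_simps)
    hence b2: "F x powr \<beta> \<le> 2 * (real y - real x)" using d0 xy by (simp add: of_nat_diff mult.commute)
    have "F x powr \<beta> / F x \<le> 16 * (ln (ln (real y+1)) - ln (ln (real x+1)))"
      by (rule pair_ineq[where x="real x" and y="real y"]) (use x2 xy b2 Fb[OF xK] in \<open>auto simp: F_def\<close>)
    thus ?thesis by (simp add: wF[OF xK] \<Phi>_def)
  qed
  have finK: "finite K" by (rule finite_subset[of _ "{..q}"]) (auto simp: K_def)
  have rhs0: "0 \<le> ln (1 / \<delta>)" using d0 assms(7) by simp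
  show ?thesis
  proof (cases "K = {}")
    case True
    thus ?thesis using rhs0 by simp
  next
    case False
    have S: "sum w K \<le> 16 * (\<Phi> (Max K) - \<Phi> (Min K)) + 1"
      by (rule sum_telescope_bound[OF finK w1 wp False])
    have MaxK: "Max K \<in> K" and MinK: "Min K \<in> K" using finK False by auto
    define P where "P = real p"
    define t where "t = ln (1 / \<delta>)"
    define A where "A = P^2 / \<delta>"
    have P1: "1 \<le> P" using assms(9) by (simp add: P_def)
    have A24: "24 \<le> A"
    proof -
      have "1 \<le> P^2" using P1 by simp
      moreover have "24 \<le> 1 / \<delta>" using d0 assms(7) by (simp add: field_simps)
      ultimately have "1 * 24 \<le> P^2 * (1/\<delta>)" by (intro mult_mono) auto
      thus ?thesis by (simp add: A_def)
    qed
    have lnA: "ln A = 2 * ln P + t" using P1 d0 by (simp add: A_def t_def ln_div ln_realpow)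
    have lnA0: "0 \<le> ln A" using A24 by simp
    have q_le: "real q \<le> A * ln A + 1"
    proof -
      have "real q = real (nat \<lfloor>A * ln A\<rfloor>) + 1" by (simp add: q_def A_def P_def)
      also have "real (nat \<lfloor>A * ln A\<rfloor>) = of_int \<lfloor>A * ln A\<rfloor>" using A24 lnA0 by simp
      also have "\<dots> \<le> A * ln A" by simp
      finally show ?thesis by simp
    qed
    have "ln A \<le> A - 1" using A24 by (intro ln_le_minus_one) simp
    hence "A * ln A \<le> A * (A - 1)" using A24 by (intro mult_left_mono) auto
    hence q1: "real q + 1 \<le> A^2" using q_le A24 by (simp add: power2_eq_square algebra_simps)
    define R where "R = ln (real (Max K) + 1)"
    define Lm where "Lm = ln (real (Min K) + 1)"
    have "real (Max K) \<le> real q" using Kp[OF MaxK] by simp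
    hence "R \<le> ln (A^2)" unfolding R_def using q1 by (intro ln_mono) auto
    hence R_le: "R \<le> 4 * ln P + 2 * t" using lnA A24 by (simp add: ln_realpow)
    have "P + 2 \<le> real (Min K) + 1" using Kp[OF MinK] by (simp add: P_def)
    hence Lm1: "ln (P + 2) \<le> Lm" unfolding Lm_def using P1 by simp
    have "ln 3 \<le> ln (P + 2)" using P1 by simp
    hence Lm_ge1: "1 \<le> Lm" using Lm1 ln3_ge1 by linarith
    have lnP: "ln P \<le> Lm" using Lm1 P1 by (smt (verit) ln_le_cancel_iff)
    have lnP0: "0 \<le> ln P" using P1 by simp
    have R0: "0 < R" using Kp[OF MaxK] by (simp add: R_def)
    have "\<Phi> (Max K) - \<Phi> (Min K) = ln (R / Lm)"
      using R0 Lm_ge1 Kp[OF MinK] by (simp add: \<Phi>_def R_def Lm_def ln_div)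
    also have "\<dots> \<le> R / Lm - 1" using R0 Lm_ge1 by (intro ln_le_minus_one) simp
    also have "R / Lm \<le> (4 * ln P + 2 * t) / Lm" using R_le Lm_ge1 by (simp add: divide_right_mono)
    also have "(4 * ln P + 2 * t) / Lm = 4 * (ln P / Lm) + 2 * (t / Lm)" by (simp add: add_divide_distrib)
    also have "ln P / Lm \<le> 1" using lnP Lm_ge1 by simp
    also have "t / Lm \<le> t" using Lm_ge1 rhs0 t_def by (simp add: divide_le_eq mult_le_cancel_left1)
    finally have "\<Phi> (Max K) - \<Phi> (Min K) \<le> 3 + 2 * t" by simp
    hence "16 * (\<Phi> (Max K) - \<Phi> (Min K)) \<le> 16 * (3 + 2 * t)" by (rule mult_left_mono) simp
    hence "sum w K \<le> 16 * (3 + 2 * t) + 1" using S by linarith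
    also have "\<dots> \<le> 2^6 * (1 + t)" using rhs0 t_def by simp
    finally show ?thesis by (simp add: w_def t_def)
  qed
qed

end
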